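(* (Weak duality.) Let $h\in\mathcal{M}_{\mathbb{F}}(0)$. Then for all $x\in\mathbb{R}^n$, \[ \sup_{\mathbf{u}\in\mathcal{U}_{\mathbb{F}}(0)} J(0,x;\mathbf{u})\;\le\;\mathbb{E}_{0,x}\Big[\sup_{\mathbf{u}\in\mathcal{U}(0)}\Big\{\Lambda(x_T)+\int_0^T g(t,x_t,u_t)\,dt-h(\mathbf{u},\mathbf{w})\Big\}\Big]. \]
   Context: Let $(\Omega,\mathcal{F},\mathbb{P})$ carry an $m$-dimensional Brownian motion $\mathbf{w}=(w_t)_{t\in[0,T]}$ with natural augmented filtration $\mathbb{F}=\{\mathcal{F}_t\}$, $\mathcal{F}=\mathcal{F}_T$. The controlled state $x_t\in\mathbb{R}^n$ follows $dx_t=b(t,x_t,u_t)\,dt+\sigma(t,x_t)\,dw_t$, $0\le t\le T$, where $u_t\in\mathcal{U}\subset\mathbb{R}^{d_u}$, $b:[0,T]\times\mathbb{R}^n\times\mathcal{U}\to\mathbb{R}^n$, $\sigma:[0,T]\times\mathbb{R}^n\to\mathbb{R}^{n\times m}$ are continuous, with $\|b(t,x,u)\|+\|\sigma(t,x)\|\le C_1(1+\|x\|+\|u\|)$ and $b,\sigma$ Lipschitz in $(t,x)$ uniformly in $u$. The set $\mathcal{U}_{\mathbb{F}}(t)$ of admissible strategies at time $t$ consists of $\mathbb{F}$-progressively measurable $\mathcal{U}$-valued processes $\mathbf{u}=(u_s)_{s\in[t,T]}$ with $\mathbb{E}[\int_t^T\|u_s\|^2ds]<\infty$ and $\mathbb{E}_{t,x}[\sup_{s\in[t,T]}\|x_s\|^2]<\infty$,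 where $\mathbb{E}_{t,x}[\cdot]=\mathbb{E}[\cdot\mid x_t=x]$. The set $\mathcal{U}(t)$ consists of all $\mathcal{B}([t,T])\times\mathcal{F}$-measurable $\mathcal{U}$-valued processes $(u_s)_{s\in[t,T]}$ (possibly anticipative). It is assumed that for each $\mathbf{u}\in\mathcal{U}(0)$ and initial condition $x_0=x$ the state equation has a unique $\mathcal{B}([0,T])\times\mathcal{F}$-measurable solution $(x_t)$, coinciding with the usual Itô solution when $\mathbf{u}\in\mathcal{U}_{\mathbb{F}}(0)$. Rewards $\Lambda:\mathbb{R}^n\to\mathbb{R}$, $g:[0,T]\times\mathbb{R}^n\times\mathcal{U}\to\mathbb{R}$ satisfy polynomial growth: $|\Lambda(x)|\le C_\Lambda(1+\|x\|^{c_\Lambda})$, $|g(t,x,u)|\le C_g(1+\|x\|^{c_g}+\|u\|^{c_g})$. $J(t,x;\mathbf{u})=\mathbb{E}_{t,x}[\Lambda(x_T)+\int_t^T g(s,x_s,u_s)ds]$. The set $\mathcal{M}_{\mathbb{F}}(0)$ of dual feasible penalties consists of functions $h(\mathbf{u},\mathbf{w})$ of a control strategy $\mathbf{u}\in\mathcal{U}(0)$ and a Brownian path $\mathbf{w}$ such that $\mathbb{E}_{0,x}[h(\mathbf{u},\mathbf{w})]\le 0$ for all $x\in\mathbb{R}^n$ and all $\mathbf{u}\in\mathcal{U}_{\mathbb{F}}(0)$. *)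

theory Defs
  imports "HOL-Probability.Probability"
begin

definition brownian_motion ::
  "'a measure \<Rightarrow> real \<Rightarrow> (real \<Rightarrow> 'a \<Rightarrow> real^'m) \<Rightarrow> bool" where
  "brownian_motion M T W \<longleftrightarrow>
     prob_space M \<and>
     (\<forall>t. W t \<in> borel_measurable M) \<and>
     (\<forall>\<omega>\<in>space M. W 0 \<omega> = 0 \<and> continuous_on {0..T} (\<lambda>t. W t \<omega>)) \<and>
     (\<forall>ts::real list. sorted_wrt (<) ts \<longrightarrow> set ts \<subseteq> {0..T} \<longrightarrow>
        prob_space.indep_vars M (\<lambda>_. borel)
          (\<lambda>(i::'m, j::nat) \<omega>. W (ts ! Suc j) \<omega> $ i - W (ts ! j) \<omega> $ i)
          (UNIV \<times> {..<length ts - 1}) \<and>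
        (\<forall>i j. j < length ts - 1 \<longrightarrow>
           distributed M lborel (\<lambda>\<omega>. W (ts ! Suc j) \<omega> $ i - W (ts ! j) \<omega> $ i)
             (normal_density 0 (sqrt (ts ! Suc j - ts ! j)))))"

definition aug_filtration ::
  "'a measure \<Rightarrow> (real \<Rightarrow> 'a \<Rightarrow> real^'m) \<Rightarrow> real \<Rightarrow> 'a measure" where
  "aug_filtration M W t = sigma (space M)
     ({W s -` B \<inter> space M | s B. 0 \<le> s \<and> s \<le> t \<and> B \<in> sets borel} \<union>
      {N. N \<subseteq> space M \<and> (\<exists>B\<in>null_sets M. N \<subseteq> B)})"

definition prog_measurable ::
  "'a measure \<Rightarrow> (real \<Rightarrow> 'a \<Rightarrow> real^'m) \<Rightarrow> real \<Rightarrow> (real \<Rightarrow> 'a \<Rightarrow> 'b::topological_space) \<Rightarrow> bool" where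
  "prog_measurable M W T u \<longleftrightarrow>
     (\<forall>s\<in>{0..T}. (\<lambda>(t, \<omega>). u t \<omega>) \<in>
        borel_measurable (restrict_space lborel {0..s} \<Otimes>\<^sub>M aug_filtration M W s))"

text \<open>The set U(0): all B([0,T]) x F measurable, U-valued (possibly anticipative) processes.\<close>
definition controls_all ::
  "'a measure \<Rightarrow> real \<Rightarrow> (real^'d) set \<Rightarrow> (real \<Rightarrow> 'a \<Rightarrow> real^'d) set" where
  "controls_all M T Uset = {u.
     (\<forall>t\<in>{0..T}. \<forall>\<omega>\<in>space M. u t \<omega> \<in> Uset) \<and>
     (\<lambda>(t, \<omega>). u t \<omega>) \<in> borel_measurable (restrict_space lborel {0..T} \<Otimes>\<^sub>M M)}"

text \<open>The set U_F(0) for initial state x, given the state map X (X u x t \<omega> = x_t under u, x_0 = x).\<close>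
definition controls_adapted ::
  "'a measure \<Rightarrow> (real \<Rightarrow> 'a \<Rightarrow> real^'m) \<Rightarrow> real \<Rightarrow> (real^'d) set
   \<Rightarrow> ((real \<Rightarrow> 'a \<Rightarrow> real^'d) \<Rightarrow> real^'n \<Rightarrow> real \<Rightarrow> 'a \<Rightarrow> real^'n) \<Rightarrow> real^'n
   \<Rightarrow> (real \<Rightarrow> 'a \<Rightarrow> real^'d) set" where
  "controls_adapted M W T Uset X x = {u.
     (\<forall>t\<in>{0..T}. \<forall>\<omega>\<in>space M. u t \<omega> \<in> Uset) \<and>
     prog_measurable M W T u \<and>
     (\<integral>\<^sup>+ \<omega>. (\<integral>\<^sup>+ t. ennreal ((norm (u t \<omega>))\<^sup>2) \<partial>(restrict_space lborel {0..T})) \<partial>M) < \<infinity> \<and>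
     (\<integral>\<^sup>+ \<omega>. (SUP s\<in>{0..T}. ennreal ((norm (X u x s \<omega>))\<^sup>2)) \<partial>M) < \<infinity>}"

text \<open>E[F] = E[F^+] - E[F^-] in the extended reals; when both parts are infinite
  (expectation undefined) the value is taken to be +\<infinity>.\<close>
definition qexp :: "'a measure \<Rightarrow> ('a \<Rightarrow> ereal) \<Rightarrow> ereal" where
  "qexp M F =
     (let P = (\<integral>\<^sup>+ \<omega>. e2ennreal (max 0 (F \<omega>)) \<partial>M);
          N = (\<integral>\<^sup>+ \<omega>. e2ennreal (max 0 (- F \<omega>)) \<partial>M)
      in if P = \<infinity> \<and> N = \<infinity> then \<infinity> else enn2ereal P - enn2ereal N)"

definition reward ::
  "real \<Rightarrow> (real^'n \<Rightarrow> real) \<Rightarrow> (real \<Rightarrow> real^'n \<Rightarrow> real^'d \<Rightarrow> real)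
   \<Rightarrow> ((real \<Rightarrow> 'a \<Rightarrow> real^'d) \<Rightarrow> real^'n \<Rightarrow> real \<Rightarrow> 'a \<Rightarrow> real^'n)
   \<Rightarrow> real^'n \<Rightarrow> (real \<Rightarrow> 'a \<Rightarrow> real^'d) \<Rightarrow> 'a \<Rightarrow> real" where
  "reward T Lam g X x u \<omega> =
     Lam (X u x T \<omega>) + (LINT t:{0..T}|lborel. g t (X u x t \<omega>) (u t \<omega>))"

definition Jval ::
  "'a measure \<Rightarrow> real \<Rightarrow> (real^'n \<Rightarrow> real) \<Rightarrow> (real \<Rightarrow> real^'n \<Rightarrow> real^'d \<Rightarrow> real)
   \<Rightarrow> ((real \<Rightarrow> 'a \<Rightarrow> real^'d) \<Rightarrow> real^'n \<Rightarrow> real \<Rightarrow> 'a \<Rightarrow> real^'n)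
   \<Rightarrow> real^'n \<Rightarrow> (real \<Rightarrow> 'a \<Rightarrow> real^'d) \<Rightarrow> ereal" where
  "Jval M T Lam g X x u = qexp M (\<lambda>\<omega>. ereal (reward T Lam g X x u \<omega>))"

definition dual_feasible ::
  "'a measure \<Rightarrow> (real \<Rightarrow> 'a \<Rightarrow> real^'m) \<Rightarrow> real \<Rightarrow> (real^'d) set
   \<Rightarrow> ((real \<Rightarrow> 'a \<Rightarrow> real^'d) \<Rightarrow> real^'n \<Rightarrow> real \<Rightarrow> 'a \<Rightarrow> real^'n)
   \<Rightarrow> ((real \<Rightarrow> 'a \<Rightarrow> real^'d) \<Rightarrow> (real \<Rightarrow> real^'m) \<Rightarrow> real) \<Rightarrow> bool" where
  "dual_feasible M W T Uset X h \<longleftrightarrow>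
     (\<forall>x. \<forall>u\<in>controls_adapted M W T Uset X x.
        (\<lambda>\<omega>. h u (\<lambda>t. W t \<omega>)) \<in> borel_measurable M \<and>
        qexp M (\<lambda>\<omega>. ereal (h u (\<lambda>t. W t \<omega>))) \<le> 0)"

end

theory Submission
  imports Defs
begin

lemma meas_G:
  fixes g :: "real \<Rightarrow> real^'n \<Rightarrow> real^'d \<Rightarrow> real"
  assumes g_meas: "(\<lambda>(t, y, v). g t y v) \<in> borel_measurable borel"
    and Xm: "(\<lambda>(t, \<omega>). Y t \<omega>) \<in> borel_measurable (restrict_space lborel {0..T} \<Otimes>\<^sub>M M)"
    and um: "(\<lambda>(t, \<omega>). u t \<omega>) \<in> borel_measurable (restrict_space lborel {0..T} \<Otimes>\<^sub>M M)"
  shows "(\<lambda>(t, \<omega>). g t (Y t \<omega>) (u t \<omega>)) \<in> borel_measurable (restrict_space lborel {0..T} \<Otimes>\<^sub>M M)"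
proof -
  have f: "fst \<in> borel_measurable (restrict_space lborel {0..T} \<Otimes>\<^sub>M M)"
    by (rule measurable_compose[OF measurable_fst]) (simp add: measurable_restrict_space1)
  have "(\<lambda>p. (fst p, (\<lambda>(t, \<omega>). Y t \<omega>) p, (\<lambda>(t, \<omega>). u t \<omega>) p)) \<in> borel_measurable (restrict_space lborel {0..T} \<Otimes>\<^sub>M M)"
    using f Xm um by (simp add: borel_prod[symmetric])
  from measurable_compose[OF this g_meas] show ?thesis
    by (simp add: case_prod_beta')
qed

lemma meas_int:
  fixes G :: "real \<Rightarrow> 'a \<Rightarrow> real"
  assumes "(\<lambda>(t, \<omega>). G t \<omega>) \<in> borel_measurable (restrict_space lborel {0..T} \<Otimes>\<^sub>M M)"
  shows "(\<lambda>\<omega>. LINT t:{0..T}|lborel. G t \<omega>) \<in> borel_measurable M"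
proof -
  have eq: "(LINT t:{0..T}|lborel. G t \<omega>) = integral\<^sup>L (restrict_space lborel {0..T}) (\<lambda>t. G t \<omega>)" for \<omega>
    unfolding set_lebesgue_integral_def by (subst integral_restrict_space) auto
  interpret s: sigma_finite_measure "restrict_space lborel {0..T::real}"
    by (rule sigma_finite_measure_restrict_space) (auto simp: lborel.sigma_finite_measure_axioms)
  have "(\<lambda>(\<omega>, t). G t \<omega>) \<in> borel_measurable (M \<Otimes>\<^sub>M restrict_space lborel {0..T})"
    using assms by (subst measurable_pair_swap_iff) simp
  from s.borel_measurable_lebesgue_integral[OF this] show ?thesis
    unfolding eq by simp
qed
lemma qexp_mono:
  assumes "\<And>\<omega>. \<omega> \<in> space M \<Longrightarrow> F \<omega> \<le> G \<omega>"
  shows "qexp M F \<le> qexp M G"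
proof -
  define PF where "PF = (\<integral>\<^sup>+ \<omega>. e2ennreal (max 0 (F \<omega>)) \<partial>M)"
  define NF where "NF = (\<integral>\<^sup>+ \<omega>. e2ennreal (max 0 (- F \<omega>)) \<partial>M)"
  define PG where "PG = (\<integral>\<^sup>+ \<omega>. e2ennreal (max 0 (G \<omega>)) \<partial>M)"
  define NG where "NG = (\<integral>\<^sup>+ \<omega>. e2ennreal (max 0 (- G \<omega>)) \<partial>M)"
  have P: "PF \<le> PG" unfolding PF_def PG_def
    by (intro nn_integral_mono e2ennreal_mono) (use assms in \<open>auto intro: max.coboundedI2 order_trans\<close>)
  have N: "NG \<le> NF" unfolding NF_def NG_def
    by (intro nn_integral_mono e2ennreal_mono) (use assms in \<open>auto intro: max.coboundedI2 order_trans\<close>)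
  have "(if PF = \<infinity> \<and> NF = \<infinity> then \<infinity> else enn2ereal PF - enn2ereal NF)
      \<le> (if PG = \<infinity> \<and> NG = \<infinity> then \<infinity> else enn2ereal PG - enn2ereal NG)"
  proof (cases "PG = \<infinity> \<and> NG = \<infinity>")
    case True then show ?thesis by simp
  next
    case False
    show ?thesis
    proof (cases "PF = \<infinity> \<and> NF = \<infinity>")
      case True
      then have "PG = \<infinity>" using P by (simp add: top_unique)
      with False have "NG \<noteq> \<infinity>" by simp
      then obtain r where "NG = ennreal r" "r \<ge> 0" by (cases NG) auto
      then show ?thesis using True \<open>PG = \<infinity>\<close> False by simp
    next
      case False2: False
      have "enn2ereal PF \<le> enn2ereal PG" using P by (simp add: less_eq_ennreal.rep_eq)
      moreover have "enn2ereal NG \<le> enn2ereal NF" using N by (simp add: less_eq_ennreal.rep_eq)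
      ultimately have "enn2ereal PF - enn2ereal NF \<le> enn2ereal PG - enn2ereal NG"
        by (rule ereal_minus_mono)
      then show ?thesis using False False2 by (simp only: if_False)
    qed
  qed
  then show ?thesis unfolding qexp_def Let_def PF_def NF_def PG_def NG_def .
qed

lemma qexp_real:
  "qexp M (\<lambda>\<omega>. ereal (F \<omega>)) =
     (let P = (\<integral>\<^sup>+ \<omega>. ennreal (F \<omega>) \<partial>M); N = (\<integral>\<^sup>+ \<omega>. ennreal (- F \<omega>) \<partial>M)
      in if P = \<infinity> \<and> N = \<infinity> then \<infinity> else enn2ereal P - enn2ereal N)"
proof -
  have a: "e2ennreal (max 0 (ereal r)) = ennreal r" for r
    by (simp add: ennreal.abs_eq sup_max)
  have b: "e2ennreal (max 0 (- ereal r)) = ennreal (- r)" for r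
    using a[of "-r"] by simp
  show ?thesis unfolding qexp_def a b ..
qed

lemma arith_enn0:
  fixes pR nR pD nD pH nH :: ennreal
  assumes eq: "pR + nD + nH = nR + pD + pH" and le: "pR \<le> pD + pH"
    and fin: "pH \<noteq> \<top>" and hle: "pH \<le> nH"
  shows "(if pR = \<top> \<and> nR = \<top> then \<infinity> else enn2ereal pR - enn2ereal nR)
       \<le> (if pD = \<top> \<and> nD = \<top> then \<infinity> else enn2ereal pD - enn2ereal nD)"
proof (cases "pD = \<top> \<and> nD = \<top>")
  case True then show ?thesis by simp
next
  case F1: False
  obtain h where h: "pH = ennreal h" "h \<ge> 0" using fin by (cases pH) auto
  show ?thesis
  proof (cases "pD = \<top>")
    case True
    with F1 obtain d where "nD = ennreal d" "d \<ge> 0" by (cases nD) auto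
    with True F1 show ?thesis by simp
  next
    case pDf: False
    obtain p where p: "pD = ennreal p" "p \<ge> 0" using pDf by (cases pD) auto
    have "pD + pH = ennreal (p + h)" using p h by (simp add: ennreal_plus)
    then have pRf: "pR \<noteq> \<top>" using le by (metis ennreal_neq_top top_unique)
    obtain r where r: "pR = ennreal r" "r \<ge> 0" using pRf by (cases pR) auto
    show ?thesis
    proof (cases "nR = \<top>")
      case True
      then show ?thesis unfolding r(1) using r by simp
    next
      case nRf: False
      obtain q where q: "nR = ennreal q" "q \<ge> 0" using nRf by (cases nR) auto
      have rhs: "nR + pD + pH = ennreal (q + p + h)" using p q h by (simp add: ennreal_plus)
      have "pR + nD + nH \<noteq> \<top>" using eq rhs by simp
      then have nDf: "nD \<noteq> \<top>" and nHf: "nH \<noteq> \<top>" by auto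
      obtain d where d: "nD = ennreal d" "d \<ge> 0" using nDf by (cases nD) auto
      obtain k where k: "nH = ennreal k" "k \<ge> 0" using nHf by (cases nH) auto
      have "pR + nD + nH = ennreal (r + d + k)" unfolding r d k using r d k by (simp add: ennreal_plus)
      then have "ennreal (r + d + k) = ennreal (q + p + h)" using eq rhs by metis
      then have "r + d + k = q + p + h" using r d k q p h by (subst (asm) ennreal_inj) auto
      moreover have "h \<le> k" using hle h k by simp
      ultimately have "r - q \<le> p - d" by linarith
      then have "ereal r - ereal q \<le> ereal p - ereal d" by simp
      moreover have "\<not> (pR = \<top> \<and> nR = \<top>)" "\<not> (pD = \<top> \<and> nD = \<top>)" using pRf pDf by auto
      ultimately show ?thesis using r q p d by (simp only: if_False enn2ereal_ennreal)
    qed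
  qed
qed
lemma arith_enn:
  fixes pR nR pD nD pH nH :: ennreal
  assumes eq: "pR + nD + nH = nR + pD + pH" and le: "pR \<le> pD + pH"
    and fin: "pH \<noteq> \<top>" and hle: "pH \<le> nH"
  shows "(if pR = \<infinity> \<and> nR = \<infinity> then \<infinity> else enn2ereal pR - enn2ereal nR)
       \<le> (if pD = \<infinity> \<and> nD = \<infinity> then \<infinity> else enn2ereal pD - enn2ereal nD)"
  using arith_enn0[OF assms] unfolding infinity_ennreal_def .

lemma ptw: fixes a b c :: real assumes "a = b + c"
  shows "ennreal a + ennreal (- b) + ennreal (- c) = ennreal (- a) + ennreal b + ennreal c"
proof -
  have e: "ennreal x = ennreal (max 0 x)" for x :: real
    by (cases "x \<ge> 0") (auto simp: ennreal_neg)
  have "ennreal (max 0 a) + ennreal (max 0 (- b)) + ennreal (max 0 (- c)) = ennreal (max 0 a + max 0 (- b) + max 0 (- c))"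
    by (simp add: ennreal_plus)
  also have "max 0 a + max 0 (- b) + max 0 (- c) = max 0 (-a) + max 0 b + max 0 c"
    using assms by (auto simp: max_def)
  also have "ennreal (max 0 (-a) + max 0 b + max 0 c) = ennreal (max 0 (-a)) + ennreal (max 0 b) + ennreal (max 0 c)"
    by (simp add: ennreal_plus)
  finally show ?thesis by (metis e)
qed
lemma fin0: fixes P N :: ennreal
  assumes "(if P = \<top> \<and> N = \<top> then \<infinity> else enn2ereal P - enn2ereal N) \<le> 0"
  shows "P \<noteq> \<top> \<and> P \<le> N"
proof -
  have nb: "\<not> (P = \<top> \<and> N = \<top>)" using assms by (auto split: if_splits)
  then have le: "enn2ereal P - enn2ereal N \<le> 0" using assms by (simp only: if_False)
  show ?thesis
  proof (cases "N = \<top>")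
    case True then show ?thesis using nb by simp
  next
    case False
    then obtain n where n: "N = ennreal n" "n \<ge> 0" by (cases N) auto
    show ?thesis
    proof (cases "P = \<top>")
      case True then show ?thesis using le n by simp
    next
      case False
      then obtain p where p: "P = ennreal p" "p \<ge> 0" by (cases P) auto
      then show ?thesis using le n by simp
    qed
  qed
qed

lemma fin: fixes P N :: ennreal
  assumes "(if P = \<infinity> \<and> N = \<infinity> then \<infinity> else enn2ereal P - enn2ereal N) \<le> 0"
  shows "P \<noteq> \<top> \<and> P \<le> N"
  using assms unfolding infinity_ennreal_def by (rule fin0)

theorem proposition1:
  fixes M :: "'a measure" and T :: real
    and W :: "real \<Rightarrow> 'a \<Rightarrow> real^'m"
    and Uset :: "(real^'d) set"
    and X :: "(real \<Rightarrow> 'a \<Rightarrow> real^'d) \<Rightarrow> real^'n \<Rightarrow> real \<Rightarrow> 'a \<Rightarrow> real^'n"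
    and Lam :: "real^'n \<Rightarrow> real"
    and g :: "real \<Rightarrow> real^'n \<Rightarrow> real^'d \<Rightarrow> real"
    and h :: "(real \<Rightarrow> 'a \<Rightarrow> real^'d) \<Rightarrow> (real \<Rightarrow> real^'m) \<Rightarrow> real"
    and x :: "real^'n"
  assumes T_pos: "0 < T"
    and BM: "brownian_motion M T W"
    and F_eq: "sets M = sets (aug_filtration M W T)"
    and X_meas: "\<And>u x0. u \<in> controls_all M T Uset \<Longrightarrow>
          (\<lambda>(t, \<omega>). X u x0 t \<omega>) \<in> borel_measurable (restrict_space lborel {0..T} \<Otimes>\<^sub>M M)"
    and X_init: "\<And>u x0 \<omega>. u \<in> controls_all M T Uset \<Longrightarrow> \<omega> \<in> space M \<Longrightarrow> X u x0 0 \<omega> = x0"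
    and Lam_meas: "Lam \<in> borel_measurable borel"
    and g_meas: "(\<lambda>(t, y, v). g t y v) \<in> borel_measurable borel"
    and Lam_growth: "\<exists>C c. \<forall>y. \<bar>Lam y\<bar> \<le> C * (1 + norm y powr c)"
    and g_growth: "\<exists>C c. \<forall>t y v. \<bar>g t y v\<bar> \<le> C * (1 + norm y powr c + norm v powr c)"
    and h_feas: "dual_feasible M W T Uset X h"
  shows "(SUP u \<in> controls_adapted M W T Uset X x. Jval M T Lam g X x u)
         \<le> qexp M (\<lambda>\<omega>. SUP u \<in> controls_all M T Uset.
               ereal (reward T Lam g X x u \<omega> - h u (\<lambda>t. W t \<omega>)))"
proof (rule SUP_least)
  fix u assume uA: "u \<in> controls_adapted M W T Uset X x"
  have sets_eq: "sets (restrict_space lborel {0..T} \<Otimes>\<^sub>M aug_filtration M W T)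
      = sets (restrict_space lborel {0..T} \<Otimes>\<^sub>M M)"
    using F_eq by (intro sets_pair_measure_cong) auto
  have um: "(\<lambda>(t, \<omega>). u t \<omega>) \<in> borel_measurable (restrict_space lborel {0..T} \<Otimes>\<^sub>M M)"
  proof -
    have "prog_measurable M W T u" using uA by (simp add: controls_adapted_def)
    then have "(\<lambda>(t, \<omega>). u t \<omega>) \<in> borel_measurable (restrict_space lborel {0..T} \<Otimes>\<^sub>M aug_filtration M W T)"
      using T_pos unfolding prog_measurable_def by auto
    then show ?thesis using measurable_cong_sets[OF sets_eq refl, of borel] by blast
  qed
  have uC: "u \<in> controls_all M T Uset"
    using uA um by (simp add: controls_adapted_def controls_all_def)
  have Xm: "(\<lambda>(t, \<omega>). X u x t \<omega>) \<in> borel_measurable (restrict_space lborel {0..T} \<Otimes>\<^sub>M M)"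
    using X_meas[OF uC] .
  define R where "R = (\<lambda>\<omega>. reward T Lam g X x u \<omega>)"
  define H where "H = (\<lambda>\<omega>. h u (\<lambda>t. W t \<omega>))"
  have Hm: "H \<in> borel_measurable M" and Hq: "qexp M (\<lambda>\<omega>. ereal (H \<omega>)) \<le> 0"
    using h_feas uA unfolding dual_feasible_def H_def by auto
  have Rm: "R \<in> borel_measurable M"
  proof -
    have "(\<lambda>\<omega>. LINT t:{0..T}|lborel. g t (X u x t \<omega>) (u t \<omega>)) \<in> borel_measurable M"
      by (rule meas_int, rule meas_G[OF g_meas Xm um])
    moreover have "(\<lambda>\<omega>. X u x T \<omega>) \<in> borel_measurable M"
    proof -
      have "(\<lambda>\<omega>. (T, \<omega>)) \<in> measurable M (restrict_space lborel {0..T} \<Otimes>\<^sub>M M)"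
        using T_pos by (intro measurable_Pair measurable_const measurable_ident) auto
      from measurable_compose[OF this Xm] show ?thesis by simp
    qed
    then have "(\<lambda>\<omega>. Lam (X u x T \<omega>)) \<in> borel_measurable M"
      using Lam_meas by (rule measurable_compose)
    ultimately show ?thesis unfolding R_def reward_def by (intro borel_measurable_add)
  qed
  define pR where "pR = (\<integral>\<^sup>+ \<omega>. ennreal (R \<omega>) \<partial>M)"
  define nR where "nR = (\<integral>\<^sup>+ \<omega>. ennreal (- R \<omega>) \<partial>M)"
  define pD where "pD = (\<integral>\<^sup>+ \<omega>. ennreal (R \<omega> - H \<omega>) \<partial>M)"
  define nD where "nD = (\<integral>\<^sup>+ \<omega>. ennreal (- (R \<omega> - H \<omega>)) \<partial>M)"
  define pH where "pH = (\<integral>\<^sup>+ \<omega>. ennreal (H \<omega>) \<partial>M)"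
  define nH where "nH = (\<integral>\<^sup>+ \<omega>. ennreal (- H \<omega>) \<partial>M)"
  have "pH \<noteq> \<top> \<and> pH \<le> nH"
    using Hq unfolding qexp_real Let_def pH_def nH_def by (rule fin)
  then have pHf: "pH \<noteq> \<top>" and pHn: "pH \<le> nH" by auto
  have eq: "pR + nD + nH = nR + pD + pH"
  proof -
    have "(\<integral>\<^sup>+ \<omega>. ennreal (R \<omega>) + ennreal (- (R \<omega> - H \<omega>)) + ennreal (- H \<omega>) \<partial>M)
        = (\<integral>\<^sup>+ \<omega>. ennreal (- R \<omega>) + ennreal (R \<omega> - H \<omega>) + ennreal (H \<omega>) \<partial>M)"
      by (intro nn_integral_cong ptw) simp
    then show ?thesis unfolding pR_def nR_def pD_def nD_def pH_def nH_def
      using Rm Hm by (simp add: nn_integral_add)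
  qed
  have le: "pR \<le> pD + pH"
  proof -
    have "pR \<le> (\<integral>\<^sup>+ \<omega>. ennreal (R \<omega> - H \<omega>) + ennreal (H \<omega>) \<partial>M)"
      unfolding pR_def
    proof (intro nn_integral_mono)
      fix \<omega>
      have "ennreal (R \<omega>) \<le> ennreal (max 0 (R \<omega> - H \<omega>) + max 0 (H \<omega>))"
        by (intro ennreal_leI) linarith
      also have "\<dots> = ennreal (max 0 (R \<omega> - H \<omega>)) + ennreal (max 0 (H \<omega>))"
        by (simp add: ennreal_plus)
      also have "\<dots> = ennreal (R \<omega> - H \<omega>) + ennreal (H \<omega>)"
        by (metis ennreal_max_0)
      finally show "ennreal (R \<omega>) \<le> ennreal (R \<omega> - H \<omega>) + ennreal (H \<omega>)" .
    qed
    also have "\<dots> = pD + pH" unfolding pD_def pH_def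
      using Rm Hm by (simp add: nn_integral_add)
    finally show ?thesis .
  qed
  have "Jval M T Lam g X x u = qexp M (\<lambda>\<omega>. ereal (R \<omega>))"
    unfolding Jval_def R_def ..
  also have "\<dots> \<le> qexp M (\<lambda>\<omega>. ereal (R \<omega> - H \<omega>))"
    unfolding qexp_real Let_def
    using arith_enn[OF eq le pHf pHn] unfolding pR_def nR_def pD_def nD_def pH_def nH_def .
  also have "\<dots> \<le> qexp M (\<lambda>\<omega>. SUP u \<in> controls_all M T Uset.
               ereal (reward T Lam g X x u \<omega> - h u (\<lambda>t. W t \<omega>)))"
    by (rule qexp_mono) (use uC in \<open>auto simp: R_def H_def intro: SUP_upper2\<close>)
  finally show "Jval M T Lam g X x u \<le> qexp M (\<lambda>\<omega>. SUP u \<in> controls_all M T Uset.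
               ereal (reward T Lam g X x u \<omega> - h u (\<lambda>t. W t \<omega>)))" .
qed

end
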